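(* Consider the vanilla decentralized normalized gradient method: each node $i\in[n]$ with local function $f_i:\mathbb{R}^d\to\mathbb{R}$ iterates, in parallel, $\boldsymbol{x}_i^{t+1}=\sum_{r=1}^n w_{ir}\big(\boldsymbol{x}_r^t-\alpha\,\nabla f_r(\boldsymbol{x}_r^t)/\|\nabla f_r(\boldsymbol{x}_r^t)\|\big)$, starting from a common initialization $\boldsymbol{x}_i^0=\boldsymbol{x}_0$. For any even $n$ and any $B\ge 1$, there exist functions $\{f_i\}_{i=1}^n$ satisfying (A1) and (A2), a gradient oracle satisfying (A3), a mixing matrix $\boldsymbol{W}$ satisfying (A4), and an initialization $\boldsymbol{x}_0$, such that the associated parameters $f_*$, $L$, $\sigma$, $\boldsymbol{W}$, $\boldsymbol{x}_0$ do not depend on $B$, and for all $T\ge 1$ and all $\alpha>0$, $$\frac{1}{nT}\sum_{t=0}^{T-1}\sum_{i=1}^n\mathbb{E}\big[\|\nabla f(\boldsymbol{x}_i^t)\|\big]\ge B,$$ where $f=\frac1n\sum_{i=1}^n f_i$.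
   Context: (A1): $f_*:=\inf_{\boldsymbol{x}} f(\boldsymbol{x})>-\infty$. (A2): each $f_i$ is differentiable with $L$-Lipschitz gradient. (A3): the stochastic oracle returns $\boldsymbol{g}_i(\boldsymbol{x},\boldsymbol{\xi}_i^t)$ such that, with $\mathcal{F}_t=\sigma(\{\boldsymbol{\xi}_i^0,\dots,\boldsymbol{\xi}_i^{t-1}:i\in[n]\})$ ($\mathcal{F}_{-1}$ trivial), for every $\mathcal{F}_t$-measurable $\boldsymbol{x}$: $\mathbb{E}[\boldsymbol{g}_i(\boldsymbol{x},\boldsymbol{\xi}_i^t)\mid\mathcal{F}_t]=\nabla f_i(\boldsymbol{x})$, $\mathbb{E}[\|\boldsymbol{g}_i(\boldsymbol{x},\boldsymbol{\xi}_i^t)-\nabla f_i(\boldsymbol{x})\|^p\mid\mathcal{F}_t]\le\sigma^p$ for some $p\in(1,2]$, $\sigma\ge0$, and the samples are independent. (A4): $\boldsymbol{W}=(w_{ir})$ is nonnegative, with $w_{ir}>0$ iff $(i,r)$ is an edge of the communication graph or $i=r$, and is primitive and doubly stochastic. *)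

theory Defs
  imports "HOL-Analysis.Analysis"
begin

text \<open>Nodes are indexed by 0..n-1; an n x n matrix is a function nat => nat => real.\<close>

fun matpow :: "nat \<Rightarrow> (nat \<Rightarrow> nat \<Rightarrow> real) \<Rightarrow> nat \<Rightarrow> nat \<Rightarrow> nat \<Rightarrow> real" where
  "matpow n W 0 = (\<lambda>i r. if i = r then 1 else 0)"
| "matpow n W (Suc k) = (\<lambda>i r. \<Sum>s<n. matpow n W k i s * W s r)"

text \<open>(A4): nonnegative, positive diagonal (self-loops), doubly stochastic, primitive.
  The communication graph is the support of W (edges = positive off-diagonal entries).\<close>
definition mixing_matrix :: "nat \<Rightarrow> (nat \<Rightarrow> nat \<Rightarrow> real) \<Rightarrow> bool" where
  "mixing_matrix n W \<longleftrightarrow>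
     (\<forall>i<n. \<forall>r<n. W i r \<ge> 0) \<and>
     (\<forall>i<n. W i i > 0) \<and>
     (\<forall>i<n. (\<Sum>r<n. W i r) = 1) \<and>
     (\<forall>r<n. (\<Sum>i<n. W i r) = 1) \<and>
     (\<exists>k. \<forall>i<n. \<forall>r<n. matpow n W k i r > 0)"

definition smooth_with_grad :: "('a::euclidean_space \<Rightarrow> real) \<Rightarrow> ('a \<Rightarrow> 'a) \<Rightarrow> real \<Rightarrow> bool" where
  "smooth_with_grad f gf L \<longleftrightarrow>
     (\<forall>x. (f has_derivative (\<lambda>h. gf x \<bullet> h)) (at x)) \<and>
     (\<forall>x y. norm (gf x - gf y) \<le> L * dist x y)"

text \<open>Vanilla decentralized normalized gradient method: dngm n W gf alpha x0 t i = x_i^t.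
  Convention: g / norm g = 0 when g = 0.\<close>
fun dngm :: "nat \<Rightarrow> (nat \<Rightarrow> nat \<Rightarrow> real) \<Rightarrow> (nat \<Rightarrow> 'a::euclidean_space \<Rightarrow> 'a) \<Rightarrow> real \<Rightarrow> 'a \<Rightarrow> nat \<Rightarrow> nat \<Rightarrow> 'a" where
  "dngm n W gf \<alpha> x0 0 = (\<lambda>i. x0)"
| "dngm n W gf \<alpha> x0 (Suc t) = (\<lambda>i. \<Sum>r<n. W i r *\<^sub>R
      (dngm n W gf \<alpha> x0 t r - \<alpha> *\<^sub>R ((1 / norm (gf r (dngm n W gf \<alpha> x0 t r))) *\<^sub>R gf r (dngm n W gf \<alpha> x0 t r))))"

end

theory Submission
  imports Defs
begin

lemma alt_sum_even: "even (n::nat) \<Longrightarrow> (\<Sum>j<n. (-1::real)^j) = 0"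
proof -
  assume "even n"
  then obtain m where "n = 2*m" by blast
  moreover have "(\<Sum>j<2*m. (-1::real)^j) = 0" by (induction m) auto
  ultimately show ?thesis by simp
qed

lemma mixing_avg:
  assumes "n > 0"
  shows "mixing_matrix n (\<lambda>i r. 1 / real n)"
proof -
  have "\<forall>i<n. \<forall>r<n. matpow n (\<lambda>i r. 1 / real n) (Suc 0) i r > 0"
  proof (intro allI impI)
    fix i r assume "i < n" "r < n"
    have "matpow n (\<lambda>i r. 1 / real n) (Suc 0) i r = (\<Sum>s<n. (if i = s then 1 else 0) * (1 / real n))"
      by (simp only: matpow.simps)
    also have "\<dots> = (\<Sum>s<n. if i = s then 1 / real n else 0)"
      by (rule sum.cong) auto
    also have "\<dots> = 1 / real n" using \<open>i < n\<close> by (simp add: sum.delta)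
    finally show "matpow n (\<lambda>i r. 1 / real n) (Suc 0) i r > 0" using assms by simp
  qed
  then have "\<exists>k. \<forall>i<n. \<forall>r<n. matpow n (\<lambda>i r. 1 / real n) k i r > 0" by blast
  then show ?thesis using assms unfolding mixing_matrix_def by auto
qed

theorem claim1:
  fixes n :: nat
  assumes "even n" and "n > 0"
  shows "\<exists>(L::real) (fstar::real) (W::nat \<Rightarrow> nat \<Rightarrow> real) (x0::'a::euclidean_space).
    L > 0 \<and> mixing_matrix n W \<and>
    (\<forall>B::real. B \<ge> 1 \<longrightarrow>
      (\<exists>(f::nat \<Rightarrow> 'a \<Rightarrow> real) (gf::nat \<Rightarrow> 'a \<Rightarrow> 'a).
         (\<forall>i<n. smooth_with_grad (f i) (gf i) L) \<and>
         bdd_below (range (\<lambda>x. (\<Sum>i<n. f i x) / real n)) \<and>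
         (INF x. (\<Sum>i<n. f i x) / real n) = fstar \<and>
         (\<forall>T::nat. T \<ge> 1 \<longrightarrow> (\<forall>\<alpha>::real. \<alpha> > 0 \<longrightarrow>
            (1 / (real n * real T)) *
              (\<Sum>t<T. \<Sum>i<n. norm ((1 / real n) *\<^sub>R (\<Sum>j<n. gf j (dngm n W gf \<alpha> x0 t i))))
            \<ge> B))))"
proof -
  define W :: "nat \<Rightarrow> nat \<Rightarrow> real" where "W = (\<lambda>i r. 1 / real n)"
  define e :: 'a where "e = (SOME b. b \<in> Basis)"
  have eB: "e \<in> Basis" unfolding e_def by (rule someI_ex) (use nonempty_Basis in blast)
  have ee: "e \<bullet> e = 1" using eB by simp
  have ne: "norm e = 1" using eB by simp
  have n0: "real n > 0" using assms by simp
  have alt: "(\<Sum>j<n. (-1::real)^j) = 0" using alt_sum_even assms(1) by blast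
  have main: "\<forall>B::real. B \<ge> 1 \<longrightarrow>
      (\<exists>(f::nat \<Rightarrow> 'a \<Rightarrow> real) (gf::nat \<Rightarrow> 'a \<Rightarrow> 'a).
         (\<forall>i<n. smooth_with_grad (f i) (gf i) 1) \<and>
         bdd_below (range (\<lambda>x. (\<Sum>i<n. f i x) / real n)) \<and>
         (INF x. (\<Sum>i<n. f i x) / real n) = 0 \<and>
         (\<forall>T::nat. T \<ge> 1 \<longrightarrow> (\<forall>\<alpha>::real. \<alpha> > 0 \<longrightarrow>
            (1 / (real n * real T)) *
              (\<Sum>t<T. \<Sum>i<n. norm ((1 / real n) *\<^sub>R (\<Sum>j<n. gf j (dngm n W gf \<alpha> (0::'a) t i))))
            \<ge> B)))"
  proof (intro allI impI)
    fix B :: real assume B: "B \<ge> 1"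
    define c :: "nat \<Rightarrow> real" where "c = (\<lambda>j. B + 2 * B * (-1)^j)"
    define f :: "nat \<Rightarrow> 'a \<Rightarrow> real" where "f = (\<lambda>j x. c j * (e \<bullet> x) + (x \<bullet> x) / 2 + B^2/2)"
    define gf :: "nat \<Rightarrow> 'a \<Rightarrow> 'a" where "gf = (\<lambda>j x. c j *\<^sub>R e + x)"
    have sumc: "(\<Sum>j<n. c j) = real n * B"
      unfolding c_def sum.distrib by (simp add: sum_distrib_left[symmetric] alt)
    have sm: "smooth_with_grad (f i) (gf i) 1" for i
    proof -
      have "((\<lambda>x. c i * (e \<bullet> x) + (x \<bullet> x) / 2 + B^2/2) has_derivative
              (\<lambda>h. c i * (e \<bullet> h) + (x \<bullet> h + h \<bullet> x) / 2 + 0)) (at x)" for x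
        by (auto intro!: derivative_eq_intros)
      moreover have "(\<lambda>h. c i * (e \<bullet> h) + (x \<bullet> h + h \<bullet> x) / 2 + 0) = (\<lambda>h. gf i x \<bullet> h)" for x
        unfolding gf_def by (auto simp: inner_add_left inner_add_right inner_commute)
      ultimately show ?thesis unfolding smooth_with_grad_def f_def gf_def
        by (auto simp: dist_norm)
    qed
    have favg: "(\<Sum>i<n. f i x) / real n = (norm (x + B *\<^sub>R e))^2 / 2" for x
    proof -
      have "(\<Sum>i<n. f i x) = (\<Sum>i<n. c i) * (e \<bullet> x) + real n * ((x \<bullet> x) / 2 + B^2/2)"
        unfolding f_def by (simp add: sum.distrib sum_distrib_right[symmetric] algebra_simps)
      also have "\<dots> = real n * ((norm (x + B *\<^sub>R e))^2 / 2)"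
        unfolding sumc power2_norm_eq_inner
        by (simp add: inner_add_left inner_add_right ee inner_commute algebra_simps power2_eq_square)
      finally show ?thesis using n0 by simp
    qed
    have bdd: "bdd_below (range (\<lambda>x. (\<Sum>i<n. f i x) / real n))"
      unfolding favg by (rule bdd_belowI[where m=0]) auto
    have inf: "(INF x. (\<Sum>i<n. f i x) / real n) = 0"
    proof (rule antisym)
      show "(INF x. (\<Sum>i<n. f i x) / real n) \<le> 0"
        using cINF_lower[OF bdd, of "- (B *\<^sub>R e)"] by (simp add: favg)
      show "0 \<le> (INF x. (\<Sum>i<n. f i x) / real n)"
        by (rule cINF_greatest) (auto simp: favg)
    qed
    have cabs: "(1 / norm (c j *\<^sub>R e)) * c j = (-1)^j" for j
    proof (cases "even j")
      case True then have "c j = 3 * B" by (simp add: c_def)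
      then show ?thesis using B True ne by simp
    next
      case False then have "c j = - B" by (simp add: c_def)
      then show ?thesis using B False ne by simp
    qed
    have zero: "dngm n W gf \<alpha> (0::'a) t i = 0" for \<alpha> t i
    proof (induction t arbitrary: i)
      case 0 then show ?case by simp
    next
      case (Suc t)
      have "dngm n W gf \<alpha> 0 (Suc t) i = (\<Sum>r<n. (1 / real n) *\<^sub>R
          (- (\<alpha> * ((1 / norm (c r *\<^sub>R e)) * c r)) *\<^sub>R e))"
        using Suc by (simp add: W_def gf_def)
      also have "\<dots> = (- (\<alpha> / real n) * (\<Sum>r<n. (-1)^r)) *\<^sub>R e"
        unfolding cabs by (simp add: scaleR_sum_left sum_distrib_left sum_negf)
      also have "\<dots> = 0" by (simp add: alt)
      finally show ?case .
    qed
    have gsum: "norm ((1 / real n) *\<^sub>R (\<Sum>j<n. gf j 0)) = B"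
    proof -
      have "(\<Sum>j<n. gf j 0) = (\<Sum>j<n. c j) *\<^sub>R e"
        by (simp add: gf_def scaleR_sum_left)
      then show ?thesis using sumc n0 ne B by simp
    qed
    have g2: "norm (\<Sum>j<n. gf j 0) = real n * B"
      using gsum n0 by (simp add: field_simps)
    show "\<exists>f gf. (\<forall>i<n. smooth_with_grad (f i) (gf i) 1) \<and>
         bdd_below (range (\<lambda>x. (\<Sum>i<n. f i x) / real n)) \<and>
         (INF x. (\<Sum>i<n. f i x) / real n) = 0 \<and>
         (\<forall>T::nat. T \<ge> 1 \<longrightarrow> (\<forall>\<alpha>::real. \<alpha> > 0 \<longrightarrow>
            (1 / (real n * real T)) *
              (\<Sum>t<T. \<Sum>i<n. norm ((1 / real n) *\<^sub>R (\<Sum>j<n. gf j (dngm n W gf \<alpha> (0::'a) t i))))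
            \<ge> B))"
    proof (rule exI[where x=f], rule exI[where x=gf], intro conjI)
      show "\<forall>i<n. smooth_with_grad (f i) (gf i) 1" using sm by blast
      show "bdd_below (range (\<lambda>x. (\<Sum>i<n. f i x) / real n))" by (rule bdd)
      show "(INF x. (\<Sum>i<n. f i x) / real n) = 0" by (rule inf)
      show "\<forall>T::nat. T \<ge> 1 \<longrightarrow> (\<forall>\<alpha>::real. \<alpha> > 0 \<longrightarrow>
            (1 / (real n * real T)) *
              (\<Sum>t<T. \<Sum>i<n. norm ((1 / real n) *\<^sub>R (\<Sum>j<n. gf j (dngm n W gf \<alpha> (0::'a) t i))))
            \<ge> B)"
      proof (intro allI impI)
      fix T :: nat and \<alpha> :: real assume T: "T \<ge> 1" and a: "\<alpha> > 0"
      have "(\<Sum>t<T. \<Sum>i<n. norm ((1 / real n) *\<^sub>R (\<Sum>j<n. gf j (dngm n W gf \<alpha> (0::'a) t i))))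
            = real T * real n * B" using n0 by (simp add: zero g2)
      then show "(1 / (real n * real T)) *
              (\<Sum>t<T. \<Sum>i<n. norm ((1 / real n) *\<^sub>R (\<Sum>j<n. gf j (dngm n W gf \<alpha> (0::'a) t i)))) \<ge> B"
        using T n0 by simp
    qed
    qed
  qed
  show ?thesis
    apply (rule exI[of _ 1], rule exI[of _ 0], rule exI[of _ W], rule exI[of _ 0])
    using main mixing_avg[OF assms(2)] by (simp add: W_def)
qed

end
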